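(* Consider the setting in the context. Let $\mathcal F=\{i_0,\dots,i_{\bar h-1}\}\subseteq[\bar n]$ be $\bar h$ distinct racks, $p\in[\bar h]$, $S=S_{\lfloor p/(\bar h-\delta+1)\rfloor}$, and let $\mathbf{C}$ be any codeword. (1) Let $b\in[1,u-v]$ and $\mathcal R\subseteq[\bar n]\setminus\mathcal F$ with $|\mathcal R|=\bar d$. For every $m\in[b]$ and every $a\in[l]$ with $a|_S\in\mathcal V_0$, the quantities $\sum_{g=0}^{u-1}\theta^{gm}c_{i_pu+g,a}$, $\sum_{g=0}^{u-1}\theta^{gm}c_{i_pu+g,a(i_p,a_{i_p}\oplus1)}$ and $H_{i_p,i}(a,m)$ for $i\in\mathcal F\setminus\{i_p\}$ are determined by (are linear functions of) the values $\{H_{i_p,j}(a',m): j\in\mathcal R,\ m\in[b],\ a'\in[l],\ a'|_S\in\mathcal V_0\}$. (2) Let $b\in[u-v+1,u]$ and $\mathcal R'\subseteq[\bar n]\setminus\mathcal F$ with $|\mathcal R'|=\bar d+1$. For every $m\in[u-v,b)$ and every $a\in[l]$ with $a|_S\in\mathcal V_0$, the same quantities are determined by (are linear functions of) the values $\{H_{i_p,j}(a',m): j\in\mathcal R',\ m\in[u-v,b),\ a'\in[l],\ a'|_S\in\mathcal V_0\}$.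
   Context: $[N]=\{0,\dots,N-1\}$. Integers: $\bar n$, $u>1$, $\bar k$, $0\le v<u$, $n=\bar nu$, $k=\bar ku+v$, $r=n-k$, $\bar r=\bar n-\bar k$; $\bar d=\bar k+1$; $\bar h,\delta$ with $\delta\in[1,\bar h)$, $\bar d\le\bar n-\bar h$, $\bar h-\delta+2=2^{\bar m}$ for some integer $\bar m\ge1$, and $(\bar h-\delta+1)\mid\bar h$. $l=2^{\bar n}$. $\mathbb{F}$ is a finite field with $|\mathbb{F}|\ge2n+1$ containing an element $\theta$ of multiplicative order $u$; $\xi$ is a primitive element and $\lambda_{i,j}=\xi^{2i+j}$ for $i\in[\bar n]$, $j\in\{0,1\}$. For $a\in[l]$ write $a=(a_{\bar n-1},\dots,a_0)$ in binary, and $a(i,j)$ is $a$ with its $i$-th bit replaced by $j$; $\oplus$ is addition mod 2. The code $\mathbf{C}$ consists of all $(c_{iu+g,a})_{i\in[\bar n],g\in[u],a\in[l]}$ over $\mathbb{F}$ (node $iu+g$ stores $(c_{iu+g,a})_{a\in[l]}$) with $\sum_{i=0}^{\bar n-1}\sum_{g=0}^{u-1}\theta^{gt}\lambda_{i,a_i}^tc_{iu+g,a}=0$ for all $t\in[r]$, $a\in[l]$. For distinct racks $i,j$, $a\in[l]$ and integer $m$, $H_{i,j}(a,m)=\sum_{g=0}^{u-1}\theta^{gm}c_{ju+g,a}+\sum_{g=0}^{u-1}\theta^{gm}c_{ju+g,a(i,a_i\oplus1)}$. $\mathcal V_0\subseteq\mathbb{F}_2^{2^{\bar m}-1}$ is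 the binary Hamming code of length $2^{\bar m}-1$, i.e. the kernel of a $\bar m\times(2^{\bar m}-1)$ binary matrix whose columns are all the nonzero vectors of $\mathbb{F}_2^{\bar m}$. For $q\in[\bar h/(\bar h-\delta+1))$, $S_q=\{i_{q'}: q'\in[q(\bar h-\delta+1),(q+1)(\bar h-\delta+1))\}$. For $J=\{j_0<\dots<j_{e-1}\}\subseteq[\bar n]$, the puncturing $a|_J=(a_{j_{e-1}},\dots,a_{j_0})\in\mathbb{F}_2^{e}$. *)

theory Defs
  imports Main
begin

definition abit :: "nat \<Rightarrow> nat \<Rightarrow> nat" where
  "abit a i = (a div 2 ^ i) mod 2"

definition repl :: "nat \<Rightarrow> nat \<Rightarrow> nat \<Rightarrow> nat" where
  "repl a i j = a - abit a i * 2 ^ i + j * 2 ^ i"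

definition flipb :: "nat \<Rightarrow> nat \<Rightarrow> nat" where
  "flipb a i = repl a i ((abit a i + 1) mod 2)"

definition mult_order :: "'a::field \<Rightarrow> nat \<Rightarrow> bool" where
  "mult_order x u \<longleftrightarrow> 0 < u \<and> x ^ u = 1 \<and> (\<forall>k. 0 < k \<and> k < u \<longrightarrow> x ^ k \<noteq> 1)"

definition primitive_elem :: "'a::{field,finite} \<Rightarrow> bool" where
  "primitive_elem x \<longleftrightarrow> mult_order x (card (UNIV :: 'a set) - 1)"

definition lam :: "'a::field \<Rightarrow> nat \<Rightarrow> nat \<Rightarrow> 'a" where
  "lam xi i j = xi ^ (2 * i + j)"

definition in_code :: "'a::field \<Rightarrow> 'a \<Rightarrow> nat \<Rightarrow> nat \<Rightarrow> nat \<Rightarrow> (nat \<Rightarrow> nat \<Rightarrow> 'a) \<Rightarrow> bool" where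
  "in_code theta xi nbar u r c \<longleftrightarrow>
     (\<forall>t<r. \<forall>a<2 ^ nbar.
        (\<Sum>i<nbar. \<Sum>g<u. theta ^ (g * t) * (lam xi i (abit a i)) ^ t * c (i * u + g) a) = 0)"

definition rack_sum :: "'a::field \<Rightarrow> nat \<Rightarrow> (nat \<Rightarrow> nat \<Rightarrow> 'a) \<Rightarrow> nat \<Rightarrow> nat \<Rightarrow> nat \<Rightarrow> 'a" where
  "rack_sum theta u c i a m = (\<Sum>g<u. theta ^ (g * m) * c (i * u + g) a)"

definition Hq :: "'a::field \<Rightarrow> nat \<Rightarrow> (nat \<Rightarrow> nat \<Rightarrow> 'a) \<Rightarrow> nat \<Rightarrow> nat \<Rightarrow> nat \<Rightarrow> nat \<Rightarrow> 'a" where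
  "Hq theta u c i j a m =
     (\<Sum>g<u. theta ^ (g * m) * c (j * u + g) a) + (\<Sum>g<u. theta ^ (g * m) * c (j * u + g) (flipb a i))"

definition puncture :: "nat \<Rightarrow> nat set \<Rightarrow> nat \<Rightarrow> nat" where
  "puncture a J t = abit a (sorted_list_of_set J ! t)"

text \<open>A column ordering of the Hamming parity-check matrix: column t (t < 2^m - 1) is the
  nonzero vector of F_2^m with binary encoding col t; every nonzero vector occurs exactly once.\<close>
definition hamming_cols :: "nat \<Rightarrow> (nat \<Rightarrow> nat) \<Rightarrow> bool" where
  "hamming_cols m col \<longleftrightarrow> bij_betw col {..<2 ^ m - 1} {1..<2 ^ m}"

definition in_hamming :: "nat \<Rightarrow> (nat \<Rightarrow> nat) \<Rightarrow> (nat \<Rightarrow> nat) \<Rightarrow> bool" where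
  "in_hamming m col x \<longleftrightarrow> (\<forall>s<m. even (\<Sum>t<2 ^ m - 1. x t * abit (col t) s))"

definition S_set :: "(nat \<Rightarrow> nat) \<Rightarrow> nat \<Rightarrow> nat \<Rightarrow> nat \<Rightarrow> nat set" where
  "S_set rk hbar delta q = rk ` {q * (hbar - delta + 1) ..< (q + 1) * (hbar - delta + 1)}"

definition lin_det :: "(('c \<Rightarrow> bool)) \<Rightarrow> 'i set \<Rightarrow> ('i \<Rightarrow> 'c \<Rightarrow> 'a::comm_ring_1) \<Rightarrow> ('c \<Rightarrow> 'a) \<Rightarrow> bool" where
  "lin_det P Idx G Q \<longleftrightarrow> (\<exists>\<kappa>. \<forall>c. P c \<longrightarrow> Q c = (\<Sum>x\<in>Idx. \<kappa> x * G x c))"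

end

theory Submission
  imports Defs "HOL-Computational_Algebra.Polynomial"
begin


lemma key:
  fixes x w :: "'i \<Rightarrow> 'a::field"
  assumes fin: "finite I" and inj: "inj_on x I" and wnz: "\<forall>i\<in>I. w i \<noteq> 0"
    and KI: "K \<subseteq> I" and ce: "card (I - K) \<le> e" and i0: "i0 \<in> I"
  shows "\<exists>\<kappa>. \<forall>Z. (\<forall>s<e. (\<Sum>i\<in>I. w i * x i ^ s * Z i) = 0) \<longrightarrow> Z i0 = (\<Sum>k\<in>K. \<kappa> k * Z k)"
proof (cases "i0 \<in> K")
  case True
  have fK: "finite K" using fin KI finite_subset by blast
  show ?thesis
  proof (intro exI allI impI)
    fix Z :: "'i \<Rightarrow> 'a"
    have "(\<Sum>k\<in>K. (if k = i0 then 1 else 0) * Z k) = (\<Sum>k\<in>K. if k = i0 then Z k else 0)"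
      by (rule sum.cong) auto
    also have "\<dots> = Z i0" using True fK by simp
    finally show "Z i0 = (\<Sum>k\<in>K. (if k = i0 then 1 else 0) * Z k)" by simp
  qed
next
  case False
  define J where "J = I - K - {i0}"
  define f where "f = (\<Prod>j\<in>J. [:- x j, 1:])"
  have fJ: "finite J" using fin J_def by simp
  have fK: "finite K" using fin KI finite_subset by blast
  have pf: "poly f y = (\<Prod>j\<in>J. y - x j)" for y
    unfolding f_def poly_prod by simp
  have degf: "degree f \<le> card J"
  proof -
    have "degree f \<le> sum (degree \<circ> (\<lambda>j. [:- x j, 1:])) J"
      unfolding f_def by (rule degree_prod_sum_le[OF fJ])
    also have "\<dots> = card J" by simp
    finally show ?thesis .
  qed
  have cJ: "card J < e"
  proof -
    have "i0 \<in> I - K" using i0 False by simp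
    then have "card J = card (I - K) - 1" unfolding J_def using fin by (simp add: card_Diff_singleton)
    moreover have "card (I - K) \<ge> 1" using \<open>i0 \<in> I - K\<close> fin
      by (metis One_nat_def Suc_leI card_gt_0_iff empty_iff finite_Diff)
    ultimately show ?thesis using ce by linarith
  qed
  have pi0: "poly f (x i0) \<noteq> 0"
    unfolding pf
  proof (subst prod_zero_iff[OF fJ], clarify)
    fix j assume "j \<in> J" "x i0 - x j = 0"
    then have "x i0 = x j" by simp
    with inj i0 \<open>j \<in> J\<close> have "i0 = j" unfolding J_def inj_on_def by blast
    with \<open>j \<in> J\<close> show False unfolding J_def by simp
  qed
  have pJ: "poly f (x j) = 0" if "j \<in> J" for j
    unfolding pf using that fJ by (metis (no_types, lifting) diff_self prod_zero_iff)
  define \<kappa> where "\<kappa> k = - (w k * poly f (x k)) / (w i0 * poly f (x i0))" for k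
  show ?thesis
  proof (intro exI allI impI)
    fix Z :: "'i \<Rightarrow> 'a"
    assume eqs: "\<forall>s<e. (\<Sum>i\<in>I. w i * x i ^ s * Z i) = 0"
    have "(\<Sum>i\<in>I. w i * poly f (x i) * Z i) = (\<Sum>i\<in>I. \<Sum>s\<le>degree f. coeff f s * (w i * x i ^ s * Z i))"
      by (rule sum.cong) (simp_all add: poly_altdef sum_distrib_left sum_distrib_right mult_ac)
    also have "\<dots> = (\<Sum>s\<le>degree f. coeff f s * (\<Sum>i\<in>I. w i * x i ^ s * Z i))"
      by (subst sum.swap) (simp add: sum_distrib_left)
    also have "\<dots> = 0"
      by (rule sum.neutral) (use eqs degf cJ in auto)
    finally have tot: "(\<Sum>i\<in>I. w i * poly f (x i) * Z i) = 0" .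
    have IJ: "I = insert i0 K \<union> J" using i0 KI J_def by auto
    have disj: "insert i0 K \<inter> J = {}" using J_def by auto
    have "(\<Sum>i\<in>I. w i * poly f (x i) * Z i) = (\<Sum>i\<in>insert i0 K. w i * poly f (x i) * Z i) + (\<Sum>i\<in>J. w i * poly f (x i) * Z i)"
      unfolding IJ by (rule sum.union_disjoint) (use fK fJ disj in auto)
    also have "(\<Sum>i\<in>J. w i * poly f (x i) * Z i) = 0" using pJ by simp
    also have "(\<Sum>i\<in>insert i0 K. w i * poly f (x i) * Z i) = w i0 * poly f (x i0) * Z i0 + (\<Sum>i\<in>K. w i * poly f (x i) * Z i)"
      using False fK by simp
    finally have eq: "w i0 * poly f (x i0) * Z i0 + (\<Sum>i\<in>K. w i * poly f (x i) * Z i) = 0" using tot by simp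
    have nz: "w i0 * poly f (x i0) \<noteq> 0" using wnz i0 pi0 by simp
    have "(\<Sum>k\<in>K. \<kappa> k * Z k) = - (\<Sum>i\<in>K. w i * poly f (x i) * Z i) / (w i0 * poly f (x i0))"
      unfolding \<kappa>_def by (simp add: sum_divide_distrib sum_negf[symmetric])
    also have "\<dots> = Z i0" using eq nz by (simp add: field_simps add_eq_0_iff)
    finally show "Z i0 = (\<Sum>k\<in>K. \<kappa> k * Z k)" by simp
  qed
qed

lemma unset_nat: "bit (a::nat) i \<Longrightarrow> a - 2 ^ i = unset_bit i a"
proof -
  assume h: "bit a i"
  have "int (unset_bit i a) = unset_bit i (int a)" by (rule of_nat_unset_bit_eq)
  also have "\<dots> = int a - 2 ^ i" using h by (simp add: unset_bit_eq bit_of_nat_iff)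
  finally have "int (unset_bit i a + 2 ^ i) = int a" by simp
  then have "unset_bit i a + 2 ^ i = a" by (simp only: of_nat_eq_iff)
  then show ?thesis by linarith
qed
lemma abit_of_bool: "abit a i = of_bool (bit a i)"
  unfolding abit_def by (simp add: bit_iff_odd odd_iff_mod_2_eq_one)
lemma flipb_eq: "flipb a i = flip_bit i a"
proof (cases "bit a i")
  case True
  then show ?thesis unfolding flipb_def repl_def abit_of_bool
    using unset_nat[OF True] by (simp add: flip_bit_eq_if)
next
  case False
  then show ?thesis unfolding flipb_def repl_def abit_of_bool
    by (simp add: flip_bit_eq_if set_bit_eq)
qed
lemma abit_flip_other: "j \<noteq> i \<Longrightarrow> abit (flipb a i) j = abit a j"
  unfolding flipb_eq abit_of_bool by (simp add: bit_flip_bit_iff)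
lemma abit_flip_same: "abit (flipb a i) i \<noteq> abit a i"
  unfolding flipb_eq abit_of_bool by (simp add: bit_flip_bit_iff)
lemma abit_le1: "abit a i \<le> 1"
  unfolding abit_of_bool by simp
lemma flipb_less: "a < 2 ^ N \<Longrightarrow> i < N \<Longrightarrow> flipb a i < 2 ^ N"
  unfolding flipb_eq
  by (metis order.strict_iff_not take_bit_flip_bit_eq take_bit_nat_eq_self_iff)

lemma conv_sum:
  fixes theta L :: "'a::field"
  assumes "theta ^ u = 1"
  shows "(\<Sum>g<u. theta ^ (g * (m + u * s)) * L * c g) = L * (\<Sum>g<u. theta ^ (g * m) * c g)"
proof -
  have "theta ^ (g * (m + u * s)) = theta ^ (g * m)" for g
  proof -
    have "g * (m + u * s) = g * m + u * (g * s)" by (simp add: algebra_simps)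
    then have "theta ^ (g * (m + u * s)) = theta ^ (g * m) * (theta ^ u) ^ (g * s)"
      by (simp add: power_add power_mult)
    then show ?thesis using assms by simp
  qed
  then show ?thesis by (simp add: sum_distrib_left mult_ac)
qed

lemma lin_det_from:
  assumes fin: "finite Idx" and sub: "h ` K \<subseteq> Idx" and inj: "inj_on h K"
    and ex: "\<exists>\<kappa>. \<forall>c. P c \<longrightarrow> Q c = (\<Sum>k\<in>K. \<kappa> k * G (h k) c)"
  shows "lin_det P Idx G Q"
proof -
  obtain \<kappa> where k: "\<forall>c. P c \<longrightarrow> Q c = (\<Sum>k\<in>K. \<kappa> k * G (h k) c)" using ex by blast
  define \<kappa>' where "\<kappa>' y = (if y \<in> h ` K then \<kappa> (inv_into K h y) else 0)" for y
  show ?thesis unfolding lin_det_def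
  proof (intro exI allI impI)
    fix c assume "P c"
    have "(\<Sum>y\<in>Idx. \<kappa>' y * G y c) = (\<Sum>y\<in>h ` K. \<kappa>' y * G y c)"
      by (rule sum.mono_neutral_right) (use fin sub \<kappa>'_def in auto)
    also have "\<dots> = (\<Sum>k\<in>K. \<kappa>' (h k) * G (h k) c)"
      by (rule sum.reindex[OF inj, unfolded comp_def])
    also have "\<dots> = (\<Sum>k\<in>K. \<kappa> k * G (h k) c)"
      by (rule sum.cong) (use inj \<kappa>'_def in auto)
    finally show "Q c = (\<Sum>y\<in>Idx. \<kappa>' y * G y c)" using k \<open>P c\<close> by simp
  qed
qed



lemma part:
  fixes theta xi :: "'a::field"
  assumes thu: "theta ^ u = 1" and u0: "0 < u"
    and xinj: "inj_on (\<lambda>e. xi ^ e) {..<2 * nbar * u}" and xnz: "xi \<noteq> 0"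
    and ip: "ip < nbar" and a: "a < 2 ^ nbar"
    and K: "K \<subseteq> {..<nbar} - {ip}" and ce: "card ({..nbar} - K) \<le> e"
    and er: "\<forall>s<e. m + u * s < r" and i0: "i0 \<le> nbar"
  shows "\<exists>\<kappa>. \<forall>c. in_code theta xi nbar u r c \<longrightarrow>
     (if i0 = nbar then rack_sum theta u c ip (flipb a ip) m
      else rack_sum theta u c i0 a m + (if i0 = ip then 0 else rack_sum theta u c i0 (flipb a ip) m))
     = (\<Sum>k\<in>K. \<kappa> k * Hq theta u c ip k a m)"
proof -
  define a' where "a' = flipb a ip"
  have a': "a' < 2 ^ nbar" unfolding a'_def using a ip by (rule flipb_less)
  define ri where "ri i = (if i = nbar then ip else i)" for i
  define bt where "bt i = (if i = nbar then abit a' ip else abit a i)" for i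
  define x where "x i = lam xi (ri i) (bt i) ^ u" for i
  define w where "w i = lam xi (ri i) (bt i) ^ m" for i
  define Z where "Z c i = (if i = nbar then rack_sum theta u c ip a' m
      else rack_sum theta u c i a m + (if i = ip then 0 else rack_sum theta u c i a' m))" for c i
  have xe: "x i = xi ^ ((2 * ri i + bt i) * u)" for i
    unfolding x_def lam_def by (simp add: power_mult)
  have inj: "inj_on x {..nbar}"
  proof (rule inj_onI)
    fix i j assume i: "i \<in> {..nbar}" and j: "j \<in> {..nbar}" and eq: "x i = x j"
    have rlt: "ri i < nbar" "ri j < nbar" using i j ip unfolding ri_def by auto
    have b1q: "bt q \<le> 1" for q unfolding bt_def using abit_le1[of a' ip] abit_le1[of a q] by auto
    have b1: "bt i \<le> 1" "bt j \<le> 1" using b1q by auto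
    have lt: "(2 * ri i + bt i) * u < 2 * nbar * u" "(2 * ri j + bt j) * u < 2 * nbar * u"
      using rlt b1 u0 by simp_all
    have "(2 * ri i + bt i) * u = (2 * ri j + bt j) * u"
      using xinj eq lt unfolding xe inj_on_def by blast
    then have "2 * ri i + bt i = 2 * ri j + bt j" using u0 by simp
    then have rr: "ri i = ri j" and bb: "bt i = bt j" using b1 by presburger+
    have fl: "abit a' ip \<noteq> abit a ip" unfolding a'_def by (rule abit_flip_same)
    show "i = j"
    proof (cases "i = nbar")
      case True
      show ?thesis
      proof (rule ccontr)
        assume "i \<noteq> j"
        then have "j \<noteq> nbar" using True by simp
        then have "j = ip" "bt j = abit a ip" using rr True unfolding ri_def bt_def by auto
        then show False using bb True fl unfolding bt_def by simp
      qed
    next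
      case False
      show ?thesis
      proof (cases "j = nbar")
        case True
        then have "i = ip" "bt i = abit a ip" using rr False unfolding ri_def bt_def by auto
        then show ?thesis using bb True fl unfolding bt_def by simp
      next
        case False
        then show ?thesis using rr \<open>i \<noteq> nbar\<close> unfolding ri_def by simp
      qed
    qed
  qed
  have wnz: "\<forall>i\<in>{..nbar}. w i \<noteq> 0" unfolding w_def lam_def using xnz by simp
  have KI: "K \<subseteq> {..nbar}" using K by auto
  obtain \<kappa> where kap: "\<forall>Z. (\<forall>s<e. (\<Sum>i\<in>{..nbar}. w i * x i ^ s * Z i) = 0) \<longrightarrow> Z i0 = (\<Sum>k\<in>K. \<kappa> k * Z k)"
    using key[OF _ inj wnz KI ce, of i0] i0 by auto
  show ?thesis
  proof (intro exI allI impI)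
    fix c assume cd: "in_code theta xi nbar u r c"
    have eqs: "(\<Sum>i\<in>{..nbar}. w i * x i ^ s * Z c i) = 0" if s: "s < e" for s
    proof -
      define t where "t = m + u * s"
      have tr: "t < r" using er s t_def by simp
      have wx: "w i * x i ^ s = lam xi (ri i) (bt i) ^ t" for i
        unfolding w_def x_def t_def by (simp add: power_add power_mult)
      have E: "(\<Sum>i<nbar. lam xi i (abit b i) ^ t * rack_sum theta u c i b m) = 0" if "b < 2 ^ nbar" for b
      proof -
        have "(\<Sum>i<nbar. \<Sum>g<u. theta ^ (g * t) * (lam xi i (abit b i)) ^ t * c (i * u + g) b) = 0"
          using cd tr that unfolding in_code_def by blast
        then show ?thesis unfolding rack_sum_def t_def conv_sum[OF thu] .
      qed
      note E1 = E[OF a] and E2 = E[OF a']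
      have bt': "abit a' i = abit a i" if "i \<noteq> ip" for i
        unfolding a'_def using that by (rule abit_flip_other)
      define f where "f i = lam xi i (abit a' i) ^ t * rack_sum theta u c i a' m" for i
      have "(\<Sum>i\<in>{..nbar}. w i * x i ^ s * Z c i) = (\<Sum>i<nbar. w i * x i ^ s * Z c i) + w nbar * x nbar ^ s * Z c nbar"
        by (simp add: lessThan_Suc_atMost[symmetric])
      also have "(\<Sum>i<nbar. w i * x i ^ s * Z c i) = (\<Sum>i<nbar. lam xi i (abit a i) ^ t * rack_sum theta u c i a m + (if i = ip then 0 else f i))"
        by (rule sum.cong) (simp_all add: wx Z_def ri_def bt_def f_def bt' distrib_left)
      also have "\<dots> = (\<Sum>i<nbar. lam xi i (abit a i) ^ t * rack_sum theta u c i a m) + (\<Sum>i<nbar. (if i = ip then 0 else f i))"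
        by (rule sum.distrib)
      also have "(\<Sum>i<nbar. (if i = ip then 0 else f i)) = (\<Sum>i<nbar. f i) - f ip"
      proof -
        have "(\<Sum>i<nbar. f i) = (\<Sum>i<nbar. (if i = ip then f i else 0) + (if i = ip then 0 else f i))"
          by (rule sum.cong) auto
        also have "\<dots> = f ip + (\<Sum>i<nbar. (if i = ip then 0 else f i))"
          using ip by (simp add: sum.distrib)
        finally show ?thesis by simp
      qed
      also have "w nbar * x nbar ^ s * Z c nbar = f ip"
        by (simp add: wx Z_def ri_def bt_def f_def)
      finally show ?thesis using E1 E2 unfolding f_def by simp
    qed
    have "Z c i0 = (\<Sum>k\<in>K. \<kappa> k * Z c k)" using kap eqs by blast
    moreover have "Z c k = Hq theta u c ip k a m" if "k \<in> K" for k
      using that K unfolding Z_def Hq_def rack_sum_def a'_def by auto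
    ultimately show "(if i0 = nbar then rack_sum theta u c ip (flipb a ip) m
      else rack_sum theta u c i0 a m + (if i0 = ip then 0 else rack_sum theta u c i0 (flipb a ip) m))
     = (\<Sum>k\<in>K. \<kappa> k * Hq theta u c ip k a m)"
      unfolding Z_def a'_def by simp
  qed
qed



lemma final:
  fixes theta xi :: "'a::field"
  assumes thu: "theta ^ u = 1" and u0: "0 < u"
    and xinj: "inj_on (\<lambda>e. xi ^ e) {..<2 * nbar * u}" and xnz: "xi \<noteq> 0"
    and ip: "ip < nbar" and finA: "finite A" and Asub: "\<forall>a'\<in>A. a' < 2 ^ nbar" and aA: "a \<in> A"
    and K: "K \<subseteq> {..<nbar} - {ip}" and ce: "card ({..nbar} - K) \<le> e"
    and er: "\<forall>s<e. m + u * s < r" and mM: "m \<in> M" and finM: "finite M"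
  shows "lin_det (in_code theta xi nbar u r) (K \<times> M \<times> A) (\<lambda>(j, m', a') c. Hq theta u c ip j a' m') (\<lambda>c. rack_sum theta u c ip a m) \<and>
         lin_det (in_code theta xi nbar u r) (K \<times> M \<times> A) (\<lambda>(j, m', a') c. Hq theta u c ip j a' m') (\<lambda>c. rack_sum theta u c ip (flipb a ip) m) \<and>
         (\<forall>i\<in>{..<nbar} - {ip}. lin_det (in_code theta xi nbar u r) (K \<times> M \<times> A) (\<lambda>(j, m', a') c. Hq theta u c ip j a' m') (\<lambda>c. Hq theta u c ip i a m))"
proof -
  have a: "a < 2 ^ nbar" using Asub aA by blast
  have finK: "finite K" using K finite_subset by blast
  have fin: "finite (K \<times> M \<times> A)" using finK finM finA by simp
  have sub: "(\<lambda>k. (k, m, a)) ` K \<subseteq> K \<times> M \<times> A" using mM aA by auto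
  have inj: "inj_on (\<lambda>k. (k, m, a)) K" by (rule inj_onI) simp
  note P = part[OF thu u0 xinj xnz ip a K ce er]
  have L: "lin_det (in_code theta xi nbar u r) (K \<times> M \<times> A) (\<lambda>(j, m', a') c. Hq theta u c ip j a' m') Q"
    if "\<exists>\<kappa>. \<forall>c. in_code theta xi nbar u r c \<longrightarrow> Q c = (\<Sum>k\<in>K. \<kappa> k * Hq theta u c ip k a m)" for Q
    by (rule lin_det_from[OF fin sub inj]) (use that in simp)
  have 1: "\<exists>\<kappa>. \<forall>c. in_code theta xi nbar u r c \<longrightarrow> rack_sum theta u c ip a m = (\<Sum>k\<in>K. \<kappa> k * Hq theta u c ip k a m)"
    using P[of ip] ip by simp
  have 2: "\<exists>\<kappa>. \<forall>c. in_code theta xi nbar u r c \<longrightarrow> rack_sum theta u c ip (flipb a ip) m = (\<Sum>k\<in>K. \<kappa> k * Hq theta u c ip k a m)"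
    using P[of nbar] by simp
  have 3: "\<exists>\<kappa>. \<forall>c. in_code theta xi nbar u r c \<longrightarrow> Hq theta u c ip i a m = (\<Sum>k\<in>K. \<kappa> k * Hq theta u c ip k a m)"
    if "i \<in> {..<nbar} - {ip}" for i
  proof -
    have "Hq theta u c ip i a m = rack_sum theta u c i a m + rack_sum theta u c i (flipb a ip) m" for c
      unfolding Hq_def rack_sum_def ..
    then show ?thesis using P[of i] that by simp
  qed
  show ?thesis using L[OF 1] L[OF 2] L[OF 3] by blast
qed



theorem lemma4:
  fixes theta xi :: "'a::{field,finite}"
    and nbar u kbar v n k r dbar hbar delta mbar l p :: nat
    and rk :: "nat \<Rightarrow> nat" and col :: "nat \<Rightarrow> nat"
  assumes "1 < u" and "v < u"
    and "n = nbar * u" and "k = kbar * u + v" and "r = n - k"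
    and "dbar = kbar + 1"
    and "1 \<le> delta" and "delta < hbar" and "dbar \<le> nbar - hbar"
    and "1 \<le> mbar" and "hbar - delta + 2 = 2 ^ mbar" and "(hbar - delta + 1) dvd hbar"
    and "l = 2 ^ nbar"
    and "2 * n + 1 \<le> card (UNIV :: 'a set)"
    and "mult_order theta u" and "primitive_elem xi"
    and "hamming_cols mbar col"
    and "inj_on rk {..<hbar}" and "rk ` {..<hbar} \<subseteq> {..<nbar}"
    and "p < hbar"
  shows
   "let F = rk ` {..<hbar};
        S = S_set rk hbar delta (p div (hbar - delta + 1));
        ip = rk p;
        Cd = in_code theta xi nbar u r;
        A = {a'. a' < l \<and> in_hamming mbar col (puncture a' S)}
    in
    (\<forall>b R. 1 \<le> b \<and> b \<le> u - v \<and> R \<subseteq> {..<nbar} - F \<and> card R = dbar \<longrightarrow>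
      (let Idx = R \<times> {..<b} \<times> A;
           G = (\<lambda>(j, m', a') c. Hq theta u c ip j a' m')
       in \<forall>m<b. \<forall>a\<in>A.
           lin_det Cd Idx G (\<lambda>c. rack_sum theta u c ip a m) \<and>
           lin_det Cd Idx G (\<lambda>c. rack_sum theta u c ip (flipb a ip) m) \<and>
           (\<forall>i\<in>F - {ip}. lin_det Cd Idx G (\<lambda>c. Hq theta u c ip i a m)))) \<and>
    (\<forall>b R'. u - v + 1 \<le> b \<and> b \<le> u \<and> R' \<subseteq> {..<nbar} - F \<and> card R' = dbar + 1 \<longrightarrow>
      (let Idx = R' \<times> {u - v..<b} \<times> A;
           G = (\<lambda>(j, m', a') c. Hq theta u c ip j a' m')
       in \<forall>m\<in>{u - v..<b}. \<forall>a\<in>A.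
           lin_det Cd Idx G (\<lambda>c. rack_sum theta u c ip a m) \<and>
           lin_det Cd Idx G (\<lambda>c. rack_sum theta u c ip (flipb a ip) m) \<and>
           (\<forall>i\<in>F - {ip}. lin_det Cd Idx G (\<lambda>c. Hq theta u c ip i a m))))"
proof -
  note as = assms
  have thu: "theta ^ u = 1" using assms(15) unfolding mult_order_def by blast
  have u0: "0 < u" using assms(1) by simp
  define q where "q = card (UNIV :: 'a set)"
  have nb: "hbar + dbar \<le> nbar" "1 \<le> dbar" using assms(9) assms(6) assms(8) by auto
  have n0: "0 < n" using nb u0 assms(3) by simp
  have qn: "2 * n \<le> q - 1" using assms(14) q_def by simp
  have xo: "xi ^ (q - 1) = 1" "\<forall>k. 0 < k \<and> k < q - 1 \<longrightarrow> xi ^ k \<noteq> 1"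
    using assms(16) unfolding primitive_elem_def mult_order_def q_def by auto
  have xnz: "xi \<noteq> 0"
  proof
    assume "xi = 0"
    moreover have "0 < q - 1" using qn n0 by linarith
    ultimately have "xi ^ (q - 1) = 0" by simp
    then show False using xo(1) by (metis zero_neq_one)
  qed
  have xinj: "inj_on (\<lambda>e. xi ^ e) {..<2 * nbar * u}"
  proof -
    have *: "xi ^ e1 \<noteq> xi ^ e2" if "e1 < e2" "e2 < 2 * nbar * u" for e1 e2
    proof
      assume eq: "xi ^ e1 = xi ^ e2"
      have "xi ^ e2 = xi ^ e1 * xi ^ (e2 - e1)" using that by (simp add: power_add[symmetric])
      then have "xi ^ (e2 - e1) = 1" using eq xnz by simp
      moreover have "0 < e2 - e1" "e2 - e1 < q - 1" using that qn assms(3) by (simp_all add: mult_ac)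
      ultimately show False using xo by blast
    qed
    show ?thesis
    proof (rule inj_onI)
      fix e1 e2 assume "e1 \<in> {..<2 * nbar * u}" "e2 \<in> {..<2 * nbar * u}" "xi ^ e1 = xi ^ e2"
      then show "e1 = e2" using *[of e1 e2] *[of e2 e1] by (metis lessThan_iff linorder_neqE_nat)
    qed
  qed
  have Fsub: "rk ` {..<hbar} \<subseteq> {..<nbar}" using assms(19) .
  have ipF: "rk p \<in> rk ` {..<hbar}" using assms(20) by simp
  have ip: "rk p < nbar" using Fsub ipF by auto
  let ?A = "{a'. a' < l \<and> in_hamming mbar col (puncture a' (S_set rk hbar delta (p div (hbar - delta + 1))))}"
  have finA: "finite ?A" by simp
  have Asub: "\<forall>a'\<in>?A. a' < 2 ^ nbar" using assms(13) by simp
  have rr: "r = (nbar - kbar) * u - v" using assms(3,4,5) by (simp add: diff_mult_distrib)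
  have kn: "kbar < nbar" using nb assms(6) by simp
  have cardD: "card ({..nbar} - R) = Suc nbar - card R" if "R \<subseteq> {..<nbar}" for R
  proof -
    have "R \<subseteq> {..nbar}" using that by auto
    then show ?thesis by (simp add: card_Diff_subset finite_subset)
  qed
  have G1: "lin_det (in_code theta xi nbar u r) (R \<times> {..<b} \<times> ?A) (\<lambda>(j, m', a') c. Hq theta u c (rk p) j a' m') (\<lambda>c. rack_sum theta u c (rk p) a m) \<and>
         lin_det (in_code theta xi nbar u r) (R \<times> {..<b} \<times> ?A) (\<lambda>(j, m', a') c. Hq theta u c (rk p) j a' m') (\<lambda>c. rack_sum theta u c (rk p) (flipb a (rk p)) m) \<and>
         (\<forall>i\<in>{..<nbar} - {rk p}. lin_det (in_code theta xi nbar u r) (R \<times> {..<b} \<times> ?A) (\<lambda>(j, m', a') c. Hq theta u c (rk p) j a' m') (\<lambda>c. Hq theta u c (rk p) i a m))"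
    if "1 \<le> b" "b \<le> u - v" "R \<subseteq> {..<nbar} - rk ` {..<hbar}" "card R = dbar" "m < b" "a \<in> ?A" for b R m a
  proof (rule final[OF thu u0 xinj xnz ip finA Asub that(6)])
    show "R \<subseteq> {..<nbar} - {rk p}" using that(3) ipF by auto
    have "R \<subseteq> {..<nbar}" using that(3) by auto
    then show "card ({..nbar} - R) \<le> nbar - kbar" using cardD[of R] that(4) assms(6) by auto
    show "m \<in> {..<b}" using that(5) by simp
    show "finite {..<b}" by simp
    show "\<forall>s<nbar - kbar. m + u * s < r"
    proof (intro allI impI)
      fix s assume s: "s < nbar - kbar"
      have "u * Suc s \<le> u * (nbar - kbar)" using s by (intro mult_le_mono2) simp
      then show "m + u * s < r" unfolding rr using that(2,5) assms(2) by (simp add: mult_ac)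
    qed
  qed
  have G2: "lin_det (in_code theta xi nbar u r) (R \<times> {u - v..<b} \<times> ?A) (\<lambda>(j, m', a') c. Hq theta u c (rk p) j a' m') (\<lambda>c. rack_sum theta u c (rk p) a m) \<and>
         lin_det (in_code theta xi nbar u r) (R \<times> {u - v..<b} \<times> ?A) (\<lambda>(j, m', a') c. Hq theta u c (rk p) j a' m') (\<lambda>c. rack_sum theta u c (rk p) (flipb a (rk p)) m) \<and>
         (\<forall>i\<in>{..<nbar} - {rk p}. lin_det (in_code theta xi nbar u r) (R \<times> {u - v..<b} \<times> ?A) (\<lambda>(j, m', a') c. Hq theta u c (rk p) j a' m') (\<lambda>c. Hq theta u c (rk p) i a m))"
    if "u - v + 1 \<le> b" "b \<le> u" "R \<subseteq> {..<nbar} - rk ` {..<hbar}" "card R = dbar + 1" "m \<in> {u - v..<b}" "a \<in> ?A" for b R m a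
  proof (rule final[OF thu u0 xinj xnz ip finA Asub that(6)])
    show "R \<subseteq> {..<nbar} - {rk p}" using that(3) ipF by auto
    have "R \<subseteq> {..<nbar}" using that(3) by auto
    then show "card ({..nbar} - R) \<le> nbar - kbar - 1" using cardD[of R] that(4) assms(6) by auto
    show "m \<in> {u - v..<b}" using that(5) by simp
    show "finite {u - v..<b}" by simp
    show "\<forall>s<nbar - kbar - 1. m + u * s < r"
    proof (intro allI impI)
      fix s assume s: "s < nbar - kbar - 1"
      have "u * Suc (Suc s) \<le> u * (nbar - kbar)" using s by (intro mult_le_mono2) simp
      then show "m + u * s < r" unfolding rr using that(2,5) assms(2) by (simp add: mult_ac, arith)
    qed
  qed
  have FF: "rk ` {..<hbar} - {rk p} \<subseteq> {..<nbar} - {rk p}" using Fsub by auto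
  show ?thesis unfolding Let_def
    apply (intro conjI allI impI ballI; elim conjE)
    apply (rule G1[THEN conjunct1]; assumption)
    apply (rule G1[THEN conjunct2, THEN conjunct1]; assumption)
    apply (rule G1[THEN conjunct2, THEN conjunct2, rule_format]; (assumption | use FF in blast))
    apply (rule G2[THEN conjunct1]; assumption)
    apply (rule G2[THEN conjunct2, THEN conjunct1]; assumption)
    apply (rule G2[THEN conjunct2, THEN conjunct2, rule_format]; (assumption | use FF in blast))
    done
qed
end
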